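(* Let $a\in(0,1)$, $\kappa_2\in(0,1)$, and assume $\dfrac{4}{\kappa_2}\le r\le \dfrac{as}{\sqrt{5\log(8/\kappa_2)}}$. Then for every $\theta\in\mathcal{D}_{a,r}$, $$\|M(\theta)\|<\kappa_2\, r\,\|\theta^*\|.$$
   Context: Fix $d\ge1$, $\sigma>0$ and $\theta^*\in\mathbb{R}^d\setminus\{0\}$. Let $Y$ be distributed according to the mixture $\tfrac12 N(\theta^*,\sigma^2I_d)+\tfrac12 N(-\theta^*,\sigma^2I_d)$. Let $\omega(t):=1/(1+e^{-2t})$. The population EM operator is $M(\theta):=2\,\mathbb{E}\big[Y\,\omega(\langle\theta,Y\rangle/\sigma^2)\big]$. The signal-to-noise ratio is $s:=\|\theta^*\|/\sigma$. For $a\in(0,1)$ and $r\ge1$ define $\mathcal{H}_a:=\{\theta:\langle\theta,\theta^*\rangle\ge a\|\theta^*\|^2\}$, $\mathcal{B}_r:=\{\theta:\|\theta\|\le r\|\theta^*\|\}$ and $\mathcal{D}_{a,r}:=\mathcal{H}_a\cap\mathcal{B}_r$. *)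

theory Defs
  imports "HOL-Probability.Probability"
begin

definition gauss_density :: "real \<Rightarrow> 'a::euclidean_space \<Rightarrow> 'a \<Rightarrow> real" where
  "gauss_density \<sigma> \<mu> y =
     (2 * pi * \<sigma>\<^sup>2) powr (- real DIM('a) / 2) * exp (- (norm (y - \<mu>))\<^sup>2 / (2 * \<sigma>\<^sup>2))"

definition gmm_measure :: "real \<Rightarrow> 'a::euclidean_space \<Rightarrow> 'a measure" where
  "gmm_measure \<sigma> \<theta>s = density lborel
     (\<lambda>y. ennreal (1/2 * gauss_density \<sigma> \<theta>s y + 1/2 * gauss_density \<sigma> (- \<theta>s) y))"

definition omega :: "real \<Rightarrow> real" where
  "omega t = 1 / (1 + exp (- 2 * t))"

definition EM_op :: "real \<Rightarrow> 'a::euclidean_space \<Rightarrow> 'a \<Rightarrow> 'a" where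
  "EM_op \<sigma> \<theta>s \<theta> = 2 *\<^sub>R (\<integral>y. omega (inner \<theta> y / \<sigma>\<^sup>2) *\<^sub>R y \<partial>gmm_measure \<sigma> \<theta>s)"

definition snr :: "real \<Rightarrow> 'a::euclidean_space \<Rightarrow> real" where
  "snr \<sigma> \<theta>s = norm \<theta>s / \<sigma>"

definition H_set :: "'a::euclidean_space \<Rightarrow> real \<Rightarrow> 'a set" where
  "H_set \<theta>s a = {\<theta>. inner \<theta> \<theta>s \<ge> a * (norm \<theta>s)\<^sup>2}"

definition B_set :: "'a::euclidean_space \<Rightarrow> real \<Rightarrow> 'a set" where
  "B_set \<theta>s r = {\<theta>. norm \<theta> \<le> r * norm \<theta>s}"

definition D_set :: "'a::euclidean_space \<Rightarrow> real \<Rightarrow> real \<Rightarrow> 'a set" where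
  "D_set \<theta>s a r = H_set \<theta>s a \<inter> B_set \<theta>s r"

end

theory Submission
  imports Defs
begin

lemma lborel_prod_integral:
  fixes f :: "'a::euclidean_space \<Rightarrow> real \<Rightarrow> real"
  assumes int: "\<And>b. b \<in> Basis \<Longrightarrow> integrable lborel (f b)"
  shows "integrable (lborel::'a measure) (\<lambda>x. \<Prod>b\<in>Basis. f b (x \<bullet> b))
     \<and> (\<integral>x. (\<Prod>b\<in>Basis. f b (x \<bullet> b)) \<partial>(lborel::'a measure)) = (\<Prod>b\<in>Basis. integral\<^sup>L lborel (f b))"
proof -
  interpret product_sigma_finite "\<lambda>_::'a. lborel::real measure" by standard
  have meas[measurable]: "\<And>b. b \<in> Basis \<Longrightarrow> f b \<in> borel_measurable borel"
    using borel_measurable_integrable[OF int] by simp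
  have sm: "(\<lambda>g. \<Sum>b\<in>Basis. g b *\<^sub>R b) \<in> measurable (\<Pi>\<^sub>M b\<in>(Basis::'a set). lborel) (borel::'a measure)"
    by measurable
  have gm: "(\<lambda>x::'a. \<Prod>b\<in>Basis. f b (x \<bullet> b)) \<in> borel_measurable borel"
    by measurable
  have eq: "\<And>g. g \<in> space (\<Pi>\<^sub>M b\<in>(Basis::'a set). lborel) \<Longrightarrow>
      (\<Prod>b\<in>Basis. f b ((\<Sum>c\<in>Basis. g c *\<^sub>R c) \<bullet> b)) = (\<Prod>b\<in>Basis. f b (g b))"
    by (intro prod.cong refl) (simp add: inner_sum_left inner_Basis if_distrib cong: if_cong)
  have I: "integrable (\<Pi>\<^sub>M b\<in>(Basis::'a set). lborel) (\<lambda>g. \<Prod>b\<in>Basis. f b (g b))"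
    by (rule product_integrable_prod) (auto intro: int)
  show ?thesis
  proof
    show "integrable (lborel::'a measure) (\<lambda>x. \<Prod>b\<in>Basis. f b (x \<bullet> b))"
      apply (subst lborel_eq)
      apply (subst integrable_distr_eq[OF sm])
      using gm apply simp
      using I by (rule Bochner_Integration.integrable_cong[THEN iffD1, rotated 2]) (auto simp: eq)
  next
    have "(\<integral>x. (\<Prod>b\<in>Basis. f b (x \<bullet> b)) \<partial>(lborel::'a measure))
        = (\<integral>g. (\<Prod>b\<in>Basis. f b ((\<Sum>c\<in>Basis. g c *\<^sub>R c) \<bullet> b)) \<partial>(\<Pi>\<^sub>M b\<in>(Basis::'a set). lborel))"
      apply (subst lborel_eq)
      apply (rule integral_distr[OF sm])
      using gm by simp
    also have "\<dots> = (\<integral>g. (\<Prod>b\<in>Basis. f b (g b)) \<partial>(\<Pi>\<^sub>M b\<in>(Basis::'a set). lborel))"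
      by (rule Bochner_Integration.integral_cong) (auto simp: eq)
    also have "\<dots> = (\<Prod>b\<in>Basis. integral\<^sup>L lborel (f b))"
      by (rule product_integral_prod) (auto intro: int)
    finally show "(\<integral>x. (\<Prod>b\<in>Basis. f b (x \<bullet> b)) \<partial>(lborel::'a measure)) = (\<Prod>b\<in>Basis. integral\<^sup>L lborel (f b))" .
  qed
qed


lemma gauss_nonneg: "0 \<le> gauss_density \<sigma> \<mu> y"
  by (simp add: gauss_density_def)

lemma gauss_factor:
  fixes \<mu> y :: "'a::euclidean_space"
  assumes "\<sigma> > 0"
  shows "gauss_density \<sigma> \<mu> y = (\<Prod>b\<in>Basis. normal_density (\<mu> \<bullet> b) \<sigma> (y \<bullet> b))"
proof -
  define A where "A = 2 * pi * \<sigma>\<^sup>2"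
  have A: "A > 0" using assms by (simp add: A_def)
  have n: "(norm (y - \<mu>))\<^sup>2 = (\<Sum>b\<in>Basis. (y \<bullet> b - \<mu> \<bullet> b)\<^sup>2)"
  proof -
    have "(norm (y - \<mu>))\<^sup>2 = (y - \<mu>) \<bullet> (y - \<mu>)" by (rule power2_norm_eq_inner)
    also have "\<dots> = (\<Sum>b\<in>Basis. ((y - \<mu>) \<bullet> b) * ((y - \<mu>) \<bullet> b))" by (rule euclidean_inner)
    finally show ?thesis by (simp add: inner_diff_left power2_eq_square)
  qed
  have "(\<Prod>b\<in>Basis. normal_density (\<mu> \<bullet> b) \<sigma> (y \<bullet> b))
      = (\<Prod>b\<in>(Basis::'a set). 1 / sqrt A) * (\<Prod>b\<in>Basis. exp (-(y \<bullet> b - \<mu> \<bullet> b)\<^sup>2 / (2 * \<sigma>\<^sup>2)))"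
    by (simp only: prod.distrib[symmetric] normal_density_def A_def)
  also have "(\<Prod>b\<in>(Basis::'a set). exp (-(y \<bullet> b - \<mu> \<bullet> b)\<^sup>2 / (2 * \<sigma>\<^sup>2)))
      = exp (- (norm (y - \<mu>))\<^sup>2 / (2 * \<sigma>\<^sup>2))"
    by (simp add: exp_sum[symmetric] n sum_divide_distrib sum_negf)
  also have "(\<Prod>b\<in>(Basis::'a set). 1 / sqrt A) = A powr (- real DIM('a) / 2)"
  proof -
    have "(\<Prod>b\<in>(Basis::'a set). 1 / sqrt A) = (A powr (-1/2)) ^ DIM('a)"
      using A by (simp add: powr_half_sqrt[symmetric] powr_minus_divide)
    also have "\<dots> = A powr (- real DIM('a) / 2)"
      using A by (simp add: powr_power)
    finally show ?thesis .
  qed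
  finally show ?thesis by (simp add: gauss_density_def A_def)
qed

lemma nd_moment2:
  assumes "\<sigma> > 0"
  shows "integrable lborel (\<lambda>t. normal_density m \<sigma> t * t * t)"
    "(\<integral>t. normal_density m \<sigma> t * t * t \<partial>lborel) = m\<^sup>2 + \<sigma>\<^sup>2"
proof -
  have e: "\<And>t. normal_density m \<sigma> t * t * t = normal_density m \<sigma> t * (t - m)^2 + 2 * m * (normal_density m \<sigma> t * t) - m\<^sup>2 * normal_density m \<sigma> t"
    by (simp add: power2_eq_square algebra_simps)
  have i1: "integrable lborel (\<lambda>t. normal_density m \<sigma> t * (t - m)^2)"
    using integrable_normal_moment[OF assms] .
  have i2: "integrable lborel (\<lambda>t. normal_density m \<sigma> t * t)"
    using integrable_normal_moment_nz_1[OF assms] .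
  have i3: "integrable lborel (normal_density m \<sigma>)" using integrable_normal_density[OF assms] .
  have v: "(\<integral>t. normal_density m \<sigma> t * (t - m)^2 \<partial>lborel) = \<sigma>\<^sup>2"
    using integral_normal_moment_even[OF assms, of m 1] by (simp add: numeral_2_eq_2)
  show "integrable lborel (\<lambda>t. normal_density m \<sigma> t * t * t)"
    unfolding e using i1 i2 i3 by auto
  show "(\<integral>t. normal_density m \<sigma> t * t * t \<partial>lborel) = m\<^sup>2 + \<sigma>\<^sup>2"
    unfolding e using i1 i2 i3 v integral_normal_moment_nz_1[OF assms] integral_normal_density[OF assms]
    by (simp add: power2_eq_square)
qed


lemma gauss_cross:
  fixes \<mu> :: "'a::euclidean_space"
  assumes s: "\<sigma> > 0" and b: "b \<in> Basis" and c: "c \<in> Basis"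
  shows "integrable lborel (\<lambda>y::'a. gauss_density \<sigma> \<mu> y * (y \<bullet> b) * (y \<bullet> c))"
    "(\<integral>y. gauss_density \<sigma> \<mu> y * (y \<bullet> b) * (y \<bullet> c) \<partial>lborel)
       = (\<mu> \<bullet> b) * (\<mu> \<bullet> c) + (if b = c then \<sigma>\<^sup>2 else 0)"
proof -
  define f where "f i t = normal_density (\<mu> \<bullet> i) \<sigma> t * (if i = b then t else 1) * (if i = c then t else 1)" for i t
  have pw: "(\<Prod>i\<in>Basis. f i (y \<bullet> i)) = gauss_density \<sigma> \<mu> y * (y \<bullet> b) * (y \<bullet> c)" for y :: 'a
    unfolding f_def gauss_factor[OF s] prod.distrib using b c by (simp add: prod.delta)
  have fint: "integrable lborel (f i)" for i
    unfolding f_def using integrable_normal_density[OF s] integrable_normal_moment_nz_1[OF s] nd_moment2(1)[OF s]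
    by (cases "i = b"; cases "i = c") (auto simp: mult.assoc)
  have fval: "integral\<^sup>L lborel (f i) = (if i = b then \<mu> \<bullet> i else 1) * (if i = c then \<mu> \<bullet> i else 1) + (if i = b \<and> i = c then \<sigma>\<^sup>2 else 0)" for i
    unfolding f_def using integral_normal_density[OF s] integral_normal_moment_nz_1[OF s] nd_moment2(2)[OF s]
    by (cases "i = b"; cases "i = c") (auto simp: power2_eq_square)
  note P = lborel_prod_integral[of f, OF fint]
  show "integrable lborel (\<lambda>y::'a. gauss_density \<sigma> \<mu> y * (y \<bullet> b) * (y \<bullet> c))"
    using P pw by simp
  have "(\<integral>y. gauss_density \<sigma> \<mu> y * (y \<bullet> b) * (y \<bullet> c) \<partial>lborel) = (\<Prod>i\<in>Basis. integral\<^sup>L lborel (f i))"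
    using P pw by simp
  also have "\<dots> = (\<mu> \<bullet> b) * (\<mu> \<bullet> c) + (if b = c then \<sigma>\<^sup>2 else 0)"
  proof (cases "b = c")
    case True
    have "(\<Prod>i\<in>(Basis::'a set). integral\<^sup>L lborel (f i)) = (\<Prod>i\<in>(Basis::'a set). if i = b then (\<mu> \<bullet> b) * (\<mu> \<bullet> b) + \<sigma>\<^sup>2 else 1)"
      unfolding fval using True by (intro prod.cong) auto
    then show ?thesis using b True by simp
  next
    case False
    have "(\<Prod>i\<in>(Basis::'a set). integral\<^sup>L lborel (f i)) = (\<Prod>i\<in>(Basis::'a set). (if i = b then \<mu> \<bullet> i else 1) * (if i = c then \<mu> \<bullet> i else 1))"
      unfolding fval using False by (intro prod.cong) auto
    also have "\<dots> = (\<mu> \<bullet> b) * (\<mu> \<bullet> c)"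
      unfolding prod.distrib using b c by (simp add: prod.delta)
    finally show ?thesis using False by simp
  qed
  finally show "(\<integral>y. gauss_density \<sigma> \<mu> y * (y \<bullet> b) * (y \<bullet> c) \<partial>lborel)
       = (\<mu> \<bullet> b) * (\<mu> \<bullet> c) + (if b = c then \<sigma>\<^sup>2 else 0)" .
qed

lemma gauss_mass:
  fixes \<mu> :: "'a::euclidean_space"
  assumes s: "\<sigma> > 0"
  shows "integrable lborel (gauss_density \<sigma> \<mu>)" "integral\<^sup>L lborel (gauss_density \<sigma> \<mu>) = 1"
proof -
  note P = lborel_prod_integral[of "\<lambda>i. normal_density (\<mu> \<bullet> i) \<sigma>", OF integrable_normal_density[OF s]]
  have e: "gauss_density \<sigma> \<mu> = (\<lambda>y. \<Prod>i\<in>Basis. normal_density (\<mu> \<bullet> i) \<sigma> (y \<bullet> i))"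
    using gauss_factor[OF s] by auto
  show "integrable lborel (gauss_density \<sigma> \<mu>)" using P e by simp
  show "integral\<^sup>L lborel (gauss_density \<sigma> \<mu>) = 1" using P e integral_normal_density[OF s] by simp
qed

lemma gauss_quad:
  fixes \<mu> u :: "'a::euclidean_space"
  assumes s: "\<sigma> > 0"
  shows "integrable lborel (\<lambda>y. gauss_density \<sigma> \<mu> y * (y \<bullet> u)\<^sup>2)"
    "(\<integral>y. gauss_density \<sigma> \<mu> y * (y \<bullet> u)\<^sup>2 \<partial>lborel) = (\<mu> \<bullet> u)\<^sup>2 + \<sigma>\<^sup>2 * (u \<bullet> u)"
proof -
  have pw: "gauss_density \<sigma> \<mu> y * (y \<bullet> u)\<^sup>2 = (\<Sum>b\<in>Basis. \<Sum>c\<in>Basis. (u \<bullet> b) * (u \<bullet> c) * (gauss_density \<sigma> \<mu> y * (y \<bullet> b) * (y \<bullet> c)))" for y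
  proof -
    have "(y \<bullet> u)\<^sup>2 = (\<Sum>b\<in>Basis. (y \<bullet> b) * (u \<bullet> b)) * (\<Sum>c\<in>Basis. (y \<bullet> c) * (u \<bullet> c))"
      by (simp add: power2_eq_square euclidean_inner[of y u])
    then show ?thesis
      by (simp add: sum_product sum_distrib_left algebra_simps)
  qed
  show "integrable lborel (\<lambda>y. gauss_density \<sigma> \<mu> y * (y \<bullet> u)\<^sup>2)"
    unfolding pw
    apply (rule Bochner_Integration.integrable_sum)
    apply (rule Bochner_Integration.integrable_sum)
    apply (rule integrable_mult_right)
    apply (rule gauss_cross(1)[OF s])
    apply auto
    done
  have "(\<integral>y. gauss_density \<sigma> \<mu> y * (y \<bullet> u)\<^sup>2 \<partial>lborel) =
     (\<Sum>b\<in>Basis. \<Sum>c\<in>Basis. (u \<bullet> b) * (u \<bullet> c) * ((\<mu> \<bullet> b) * (\<mu> \<bullet> c) + (if b = c then \<sigma>\<^sup>2 else 0)))"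
    unfolding pw
    apply (subst Bochner_Integration.integral_sum)
     apply (intro Bochner_Integration.integrable_sum integrable_mult_right gauss_cross(1)[OF s]; simp)
    apply (intro sum.cong refl)
    apply (subst Bochner_Integration.integral_sum)
     apply (intro Bochner_Integration.integrable_sum integrable_mult_right gauss_cross(1)[OF s]; simp)
    apply (intro sum.cong refl)
    apply (subst integral_mult_right_zero)
    apply (subst gauss_cross(2)[OF s]; simp)
    done
  also have "\<dots> = (\<Sum>b\<in>Basis. \<Sum>c\<in>Basis. (u \<bullet> b) * (\<mu> \<bullet> b) * ((u \<bullet> c) * (\<mu> \<bullet> c)))
      + \<sigma>\<^sup>2 * (\<Sum>b\<in>Basis. (u \<bullet> b) * (u \<bullet> b))"
  proof -
    have e: "(u \<bullet> b) * (u \<bullet> c) * ((\<mu> \<bullet> b) * (\<mu> \<bullet> c) + (if b = c then \<sigma>\<^sup>2 else 0))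
       = (u \<bullet> b) * (\<mu> \<bullet> b) * ((u \<bullet> c) * (\<mu> \<bullet> c)) + (if c = b then \<sigma>\<^sup>2 * ((u \<bullet> b) * (u \<bullet> b)) else 0)" for b c
      by (auto simp: algebra_simps)
    show ?thesis unfolding e sum.distrib by (simp add: sum_distrib_left)
  qed
  also have "\<dots> = (\<mu> \<bullet> u)\<^sup>2 + \<sigma>\<^sup>2 * (u \<bullet> u)"
    by (simp add: power2_eq_square euclidean_inner[of \<mu> u] euclidean_inner[of u u] sum_product algebra_simps)
  finally show "(\<integral>y. gauss_density \<sigma> \<mu> y * (y \<bullet> u)\<^sup>2 \<partial>lborel) = (\<mu> \<bullet> u)\<^sup>2 + \<sigma>\<^sup>2 * (u \<bullet> u)" .
qed


lemma gauss_meas[measurable]: "gauss_density \<sigma> \<mu> \<in> borel_measurable borel"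
  unfolding gauss_density_def by measurable

lemma gmm_facts:
  fixes \<theta>s u :: "'a::euclidean_space"
  assumes s: "\<sigma> > 0"
  shows "integrable (gmm_measure \<sigma> \<theta>s) (\<lambda>y. (y \<bullet> u)\<^sup>2)"
    "(\<integral>y. (y \<bullet> u)\<^sup>2 \<partial>gmm_measure \<sigma> \<theta>s) = (\<theta>s \<bullet> u)\<^sup>2 + \<sigma>\<^sup>2 * (u \<bullet> u)"
    "integrable (gmm_measure \<sigma> \<theta>s) (\<lambda>y. 1::real)"
    "(\<integral>y. 1 \<partial>gmm_measure \<sigma> \<theta>s) = (1::real)"
proof -
  define h where "h y = 1/2 * gauss_density \<sigma> \<theta>s y + 1/2 * gauss_density \<sigma> (- \<theta>s) y" for y
  have hm[measurable]: "h \<in> borel_measurable lborel" unfolding h_def by measurable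
  have hn: "AE y in lborel. 0 \<le> h y" unfolding h_def by (simp add: gauss_nonneg)
  have P: "gmm_measure \<sigma> \<theta>s = density lborel h" unfolding gmm_measure_def h_def ..
  have ha: "(\<lambda>y. h y * (y \<bullet> u)\<^sup>2) = (\<lambda>y. 1/2 * (gauss_density \<sigma> \<theta>s y * (y \<bullet> u)\<^sup>2) + 1/2 * (gauss_density \<sigma> (- \<theta>s) y * (y \<bullet> u)\<^sup>2))"
    by (auto simp: h_def algebra_simps)
  have hb: "h = (\<lambda>y. 1/2 * gauss_density \<sigma> \<theta>s y + 1/2 * gauss_density \<sigma> (- \<theta>s) y)"
    by (auto simp: h_def)
  show "integrable (gmm_measure \<sigma> \<theta>s) (\<lambda>y. (y \<bullet> u)\<^sup>2)"
    unfolding P integrable_density[OF _ hm hn, of "\<lambda>y. (y \<bullet> u)\<^sup>2", simplified] ha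
    by (intro Bochner_Integration.integrable_add integrable_mult_right gauss_quad(1)[OF s])
  show "(\<integral>y. (y \<bullet> u)\<^sup>2 \<partial>gmm_measure \<sigma> \<theta>s) = (\<theta>s \<bullet> u)\<^sup>2 + \<sigma>\<^sup>2 * (u \<bullet> u)"
    unfolding P integral_density[OF _ hm hn, of "\<lambda>y. (y \<bullet> u)\<^sup>2", simplified] ha
    using gauss_quad[OF s, of \<theta>s u] gauss_quad[OF s, of "-\<theta>s" u]
    by (simp add: Bochner_Integration.integral_add)
  have hi: "integrable lborel h"
    unfolding hb by (intro Bochner_Integration.integrable_add integrable_mult_right gauss_mass(1)[OF s])
  show "integrable (gmm_measure \<sigma> \<theta>s) (\<lambda>y. 1::real)"
    unfolding P using integrable_density[OF _ hm hn, of "\<lambda>y. 1::real"] hi by simp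
  have "(\<integral>y. 1 \<partial>gmm_measure \<sigma> \<theta>s) = (\<integral>y. h y *\<^sub>R (1::real) \<partial>lborel)"
    unfolding P by (rule integral_density) (auto simp: hn)
  also have "\<dots> = integral\<^sup>L lborel h" by simp
  also have "\<dots> = 1" unfolding hb
    using gauss_mass[OF s, of \<theta>s] gauss_mass[OF s, of "-\<theta>s"]
    by (simp add: Bochner_Integration.integral_add)
  finally show "(\<integral>y. 1 \<partial>gmm_measure \<sigma> \<theta>s) = (1::real)" .
qed


lemma omega_bounds: "0 < omega t" "omega t < 1"
proof -
  have e: "0 < exp (- 2 * t)" by simp
  then have d: "0 < 1 + exp (- 2 * t)" by linarith
  show "0 < omega t" unfolding omega_def using d by simp
  show "omega t < 1" unfolding omega_def using d e by (simp add: divide_less_eq)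
qed

lemma scalar_bound:
  fixes x c w :: real
  assumes "c > 0" "0 < w" "w < 1"
  shows "w * x \<le> (x\<^sup>2 + c\<^sup>2) / (2 * c)"
proof -
  have "w * x \<le> \<bar>x\<bar>"
  proof (cases "x \<ge> 0")
    case True
    then show ?thesis using assms by (simp add: mult_left_le_one_le)
  next
    case False
    then have "w * x < 0" using assms by (simp add: mult_pos_neg)
    then show ?thesis by linarith
  qed
  moreover have "\<bar>x\<bar> \<le> (x\<^sup>2 + c\<^sup>2) / (2 * c)"
  proof -
    have "0 \<le> (\<bar>x\<bar> - c)\<^sup>2" by simp
    then have "2 * c * \<bar>x\<bar> \<le> x\<^sup>2 + c\<^sup>2" by (simp add: power2_eq_square algebra_simps)
    then show ?thesis using assms by (simp add: field_simps)
  qed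
  ultimately show ?thesis by linarith
qed

theorem lemma3:
  fixes \<sigma> a \<kappa>\<^sub>2 r :: real and \<theta>s \<theta> :: "'a::euclidean_space"
  assumes "\<sigma> > 0" and "\<theta>s \<noteq> 0"
    and "0 < a" and "a < 1"
    and "0 < \<kappa>\<^sub>2" and "\<kappa>\<^sub>2 < 1"
    and "4 / \<kappa>\<^sub>2 \<le> r"
    and "r \<le> a * snr \<sigma> \<theta>s / sqrt (5 * ln (8 / \<kappa>\<^sub>2))"
    and "\<theta> \<in> D_set \<theta>s a r"
  shows "norm (EM_op \<sigma> \<theta>s \<theta>) < \<kappa>\<^sub>2 * r * norm \<theta>s"
proof -
  note s = \<open>\<sigma> > 0\<close>
  define c where "c = norm \<theta>s"
  have c: "c > 0" using assms(2) by (simp add: c_def)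
  have k4: "4 \<le> \<kappa>\<^sub>2 * r" using assms(5,7) by (simp add: field_simps)
  have r4: "r > 1"
  proof -
    have "4 / \<kappa>\<^sub>2 > 4" using assms(5,6) by (simp add: field_simps)
    then show ?thesis using assms(7) by linarith
  qed
  have q1: "1 \<le> sqrt (5 * ln (8 / \<kappa>\<^sub>2))"
  proof -
    have "exp 1 \<le> 8 / \<kappa>\<^sub>2"
    proof -
      have "8 / \<kappa>\<^sub>2 > 8" using assms(5,6) by (simp add: field_simps)
      then show ?thesis using exp_le by linarith
    qed
    then have "1 \<le> ln (8 / \<kappa>\<^sub>2)" using assms(5) by (subst ln_ge_iff) auto
    then show ?thesis by simp
  qed
  have snr_pos: "snr \<sigma> \<theta>s > 0" using c s by (simp add: snr_def c_def)
  have "r \<le> a * snr \<sigma> \<theta>s" 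
  proof -
    have "a * snr \<sigma> \<theta>s / sqrt (5 * ln (8 / \<kappa>\<^sub>2)) \<le> a * snr \<sigma> \<theta>s"
    proof -
      have X: "0 \<le> a * snr \<sigma> \<theta>s" using snr_pos assms(3) by simp
      have "a * snr \<sigma> \<theta>s * 1 \<le> a * snr \<sigma> \<theta>s * sqrt (5 * ln (8 / \<kappa>\<^sub>2))"
        by (rule mult_left_mono[OF q1 X])
      then show ?thesis using q1 by (simp add: pos_divide_le_eq)
    qed
    then show ?thesis using assms(8) by linarith
  qed
  also have "\<dots> \<le> snr \<sigma> \<theta>s" using snr_pos assms(4) by simp
  finally have "snr \<sigma> \<theta>s > 1" using r4 by linarith
  then have sc: "\<sigma> < c" using s by (simp add: snr_def c_def field_simps)
  define P where "P = gmm_measure \<sigma> \<theta>s"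
  define F where "F y = omega (inner \<theta> y / \<sigma>\<^sup>2) *\<^sub>R y" for y
  have EM: "EM_op \<sigma> \<theta>s \<theta> = 2 *\<^sub>R integral\<^sup>L P F" unfolding EM_op_def P_def F_def ..
  have bound: "norm (integral\<^sup>L P F) \<le> c + \<sigma>\<^sup>2 / (2 * c)"
  proof (cases "integrable P F")
    case False
    then show ?thesis using c by (simp add: not_integrable_integral_eq)
  next
    case True
    define v where "v = integral\<^sup>L P F"
    show ?thesis
    proof (cases "v = 0")
      case True then show ?thesis using c unfolding v_def[symmetric] by simp
    next
      case False
      define u where "u = v /\<^sub>R norm v"
      have uu: "u \<bullet> u = 1" using False by (simp add: u_def inner_commute power2_norm_eq_inner[symmetric] divide_simps)
      have "norm v = v \<bullet> u" using False by (simp add: u_def power2_norm_eq_inner[symmetric] power2_eq_square)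
      also have "\<dots> = (\<integral>y. F y \<bullet> u \<partial>P)" unfolding v_def using True by simp
      also have "\<dots> \<le> (\<integral>y. (1 / (2 * c)) * (y \<bullet> u)\<^sup>2 + (c / 2) * 1 \<partial>P)"
      proof (rule integral_mono)
        show "integrable P (\<lambda>y. F y \<bullet> u)" using True by simp
        show "integrable P (\<lambda>y. (1 / (2 * c)) * (y \<bullet> u)\<^sup>2 + (c / 2) * 1)"
          unfolding P_def using gmm_facts(1,3)[OF s]
          by (intro Bochner_Integration.integrable_add integrable_mult_right) auto
        fix y
        have "F y \<bullet> u = omega (inner \<theta> y / \<sigma>\<^sup>2) * (y \<bullet> u)" by (simp add: F_def)
        also have "\<dots> \<le> ((y \<bullet> u)\<^sup>2 + c\<^sup>2) / (2 * c)"
          by (rule scalar_bound[OF c omega_bounds])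
        also have "\<dots> = (1 / (2 * c)) * (y \<bullet> u)\<^sup>2 + (c / 2) * 1"
          using c by (simp add: field_simps power2_eq_square)
        finally show "F y \<bullet> u \<le> (1 / (2 * c)) * (y \<bullet> u)\<^sup>2 + (c / 2) * 1" .
      qed
      also have "\<dots> = (1 / (2 * c)) * ((\<theta>s \<bullet> u)\<^sup>2 + \<sigma>\<^sup>2 * (u \<bullet> u)) + c / 2"
        unfolding P_def using gmm_facts(1,2)[OF s, of \<theta>s u] gmm_facts(3,4)[OF s, of \<theta>s]
          integrable_mult_right[of "c/2" "gmm_measure \<sigma> \<theta>s" "\<lambda>y. 1::real", OF gmm_facts(3)[OF s]]
        by (subst Bochner_Integration.integral_add) auto
      also have "\<dots> \<le> (1 / (2 * c)) * (c\<^sup>2 + \<sigma>\<^sup>2) + c / 2"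
      proof -
        have "\<bar>\<theta>s \<bullet> u\<bar> \<le> norm \<theta>s * norm u" by (rule Cauchy_Schwarz_ineq2)
        moreover have "norm u = 1" using uu by (simp add: norm_eq_sqrt_inner)
        ultimately have "\<bar>\<theta>s \<bullet> u\<bar> \<le> c" by (simp add: c_def)
        then have "(\<theta>s \<bullet> u)\<^sup>2 \<le> c\<^sup>2" by (metis abs_le_square_iff abs_of_pos c)
        then show ?thesis using c uu by (simp add: divide_right_mono)
      qed
      also have "\<dots> = c + \<sigma>\<^sup>2 / (2 * c)" using c by (simp add: field_simps power2_eq_square)
      finally show ?thesis unfolding v_def .
    qed
  qed
  have "norm (EM_op \<sigma> \<theta>s \<theta>) \<le> 2 * (c + \<sigma>\<^sup>2 / (2 * c))" unfolding EM using bound by simp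
  also have "\<dots> < 4 * c"
  proof -
    have "\<sigma>\<^sup>2 < c\<^sup>2" using s sc by (simp add: power_strict_mono)
    then have "\<sigma>\<^sup>2 / (2 * c) < c / 2" using c by (simp add: field_simps power2_eq_square)
    moreover have "2 * (c + \<sigma>\<^sup>2 / (2 * c)) = 2 * c + 2 * (\<sigma>\<^sup>2 / (2 * c))" by (simp only: distrib_left)
    ultimately show ?thesis using c by linarith
  qed
  also have "\<dots> \<le> \<kappa>\<^sub>2 * r * norm \<theta>s" using k4 c by (simp add: c_def)
  finally show ?thesis .
qed

end
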